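(* Let $r\in\wedge^2\mathfrak g$ be a non-degenerate solution of the classical Yang–Baxter equation on a finite-dimensional real Lie algebra $(\mathfrak g,[\cdot,\cdot])$ (i.e. $r^\sharp$ is invertible), and let $n:\mathfrak g\to\mathfrak g$ be a linear map with $n\circ r^\sharp=r^\sharp\circ{}^tn$ and $C(r,n)=0$. Then $nr$ (defined by $(nr)^\sharp=n\circ r^\sharp$) is a solution of the classical Yang–Baxter equation if and only if $n$ is a Nijenhuis operator.
   Context: For $r\in\wedge^2\mathfrak g$, $r^\sharp:\mathfrak g^*\to\mathfrak g$ is defined by $\langle\eta_2,r^\sharp\eta_1\rangle=r(\eta_1,\eta_2)$. $r$ solves the classical Yang–Baxter equation iff $\langle\eta_1,[r^\sharp\eta_2,r^\sharp\eta_3]\rangle-\langle\eta_2,[r^\sharp\eta_1,r^\sharp\eta_3]\rangle+\langle\eta_3,[r^\sharp\eta_1,r^\sharp\eta_2]\rangle=0$ for all $\eta_i$. $\langle\mathrm{ad}^*_\xi\eta,\zeta\rangle=-\langle\eta,[\xi,\zeta]\rangle$; ${}^tn$ is the transpose of $n$; $C(r,n)(\eta_1,\eta_2)=[{}^tn,\mathrm{ad}^*_{r^\sharp\eta_1}]\eta_2-[{}^tn,\mathrm{ad}^*_{r^\sharp\eta_2}]\eta_1$. $n$ is Nijenhuis if $n([n\xi_1,\xi_2]+[\xi_1,n\xi_2]-n[\xi_1,\xi_2])=[n\xi_1,n\xi_2]$ for all $\xi_i$. *)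

theory Defs
  imports "HOL-Analysis.Analysis"
begin

definition lie_algebra :: "('a::euclidean_space \<Rightarrow> 'a \<Rightarrow> 'a) \<Rightarrow> bool" where
  "lie_algebra br \<longleftrightarrow> bilinear br \<and> (\<forall>x. br x x = 0) \<and>
     (\<forall>x y z. br x (br y z) + br y (br z x) + br z (br x y) = 0)"

definition dual :: "('a::euclidean_space \<Rightarrow> real) set" where
  "dual = {\<eta>. linear \<eta>}"

text \<open>Elements of the exterior square of g, viewed as skew-symmetric bilinear forms on g*.\<close>
definition wedge2 :: "(('a::euclidean_space \<Rightarrow> real) \<Rightarrow> ('a \<Rightarrow> real) \<Rightarrow> real) \<Rightarrow> bool" where
  "wedge2 r \<longleftrightarrow>
     (\<forall>\<eta>1\<in>dual. \<forall>\<eta>2\<in>dual. \<forall>\<eta>3\<in>dual. \<forall>c::real.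
        r (\<lambda>x. \<eta>1 x + \<eta>2 x) \<eta>3 = r \<eta>1 \<eta>3 + r \<eta>2 \<eta>3 \<and>
        r (\<lambda>x. c * \<eta>1 x) \<eta>2 = c * r \<eta>1 \<eta>2 \<and>
        r \<eta>1 \<eta>2 = - r \<eta>2 \<eta>1)"

definition sharp :: "(('a::euclidean_space \<Rightarrow> real) \<Rightarrow> ('a \<Rightarrow> real) \<Rightarrow> real) \<Rightarrow> ('a \<Rightarrow> real) \<Rightarrow> 'a" where
  "sharp r \<eta>1 = (THE \<xi>. \<forall>\<eta>2\<in>dual. \<eta>2 \<xi> = r \<eta>1 \<eta>2)"

definition CYBE :: "('a::euclidean_space \<Rightarrow> 'a \<Rightarrow> 'a) \<Rightarrow> (('a \<Rightarrow> real) \<Rightarrow> ('a \<Rightarrow> real) \<Rightarrow> real) \<Rightarrow> bool" where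
  "CYBE br r \<longleftrightarrow> (\<forall>\<eta>1\<in>dual. \<forall>\<eta>2\<in>dual. \<forall>\<eta>3\<in>dual.
      \<eta>1 (br (sharp r \<eta>2) (sharp r \<eta>3)) - \<eta>2 (br (sharp r \<eta>1) (sharp r \<eta>3))
      + \<eta>3 (br (sharp r \<eta>1) (sharp r \<eta>2)) = 0)"

definition dual_transpose :: "('a \<Rightarrow> 'a) \<Rightarrow> ('a \<Rightarrow> real) \<Rightarrow> ('a \<Rightarrow> real)" where
  "dual_transpose n \<eta> = (\<lambda>\<xi>. \<eta> (n \<xi>))"

definition coad :: "('a \<Rightarrow> 'a \<Rightarrow> 'a) \<Rightarrow> 'a \<Rightarrow> ('a \<Rightarrow> real) \<Rightarrow> ('a \<Rightarrow> real)" where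
  "coad br \<xi> \<eta> = (\<lambda>\<zeta>. - \<eta> (br \<xi> \<zeta>))"

definition comm_tn_coad :: "('a \<Rightarrow> 'a \<Rightarrow> 'a) \<Rightarrow> ('a \<Rightarrow> 'a) \<Rightarrow> 'a \<Rightarrow> ('a \<Rightarrow> real) \<Rightarrow> ('a \<Rightarrow> real)" where
  "comm_tn_coad br n \<xi> \<eta> = (\<lambda>\<zeta>. dual_transpose n (coad br \<xi> \<eta>) \<zeta> - coad br \<xi> (dual_transpose n \<eta>) \<zeta>)"

definition concomitant :: "('a::euclidean_space \<Rightarrow> 'a \<Rightarrow> 'a) \<Rightarrow> (('a \<Rightarrow> real) \<Rightarrow> ('a \<Rightarrow> real) \<Rightarrow> real)
    \<Rightarrow> ('a \<Rightarrow> 'a) \<Rightarrow> ('a \<Rightarrow> real) \<Rightarrow> ('a \<Rightarrow> real) \<Rightarrow> ('a \<Rightarrow> real)" where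
  "concomitant br r n \<eta>1 \<eta>2 =
     (\<lambda>\<zeta>. comm_tn_coad br n (sharp r \<eta>1) \<eta>2 \<zeta> - comm_tn_coad br n (sharp r \<eta>2) \<eta>1 \<zeta>)"

text \<open>The bivector nr, determined by (nr)-sharp = n o r-sharp,
  i.e. (nr)(eta1, eta2) = eta2 (n (r-sharp eta1)).\<close>
definition nr :: "('a::euclidean_space \<Rightarrow> 'a) \<Rightarrow> (('a \<Rightarrow> real) \<Rightarrow> ('a \<Rightarrow> real) \<Rightarrow> real)
    \<Rightarrow> ('a \<Rightarrow> real) \<Rightarrow> ('a \<Rightarrow> real) \<Rightarrow> real" where
  "nr n r \<eta>1 \<eta>2 = \<eta>2 (n (sharp r \<eta>1))"

definition nijenhuis :: "('a \<Rightarrow> 'a \<Rightarrow> 'a::real_vector) \<Rightarrow> ('a \<Rightarrow> 'a) \<Rightarrow> bool" where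
  "nijenhuis br n \<longleftrightarrow> (\<forall>x y. n (br (n x) y + br x (n y) - n (br x y)) = br (n x) (n y))"

end

theory Submission
  imports Defs
begin

lemma key_identity:
  fixes w :: "'a \<Rightarrow> 'a \<Rightarrow> real"
  assumes coc: "\<And>x y z. w x (br y z) + w y (br z x) + w z (br x y) = 0"
    and con: "\<And>x1 x2 z. w x1 (br x2 (n z)) - w x2 (br x1 (n z)) + w (n x2) (br x1 z) - w (n x1) (br x2 z) = 0"
    and skw: "\<And>x y z. w x (br y z) = - w x (br z y)"
  shows "w a (br (n b) (n c)) - w b (br (n a) (n c)) + w (n c) (br (n a) b) + w (n c) (br a (n b))
         - w (n (n c)) (br a b) = 0"
proof -
  note c1 = coc[of a b "n (n c)"] and c2 = coc[of a "n b" "n c"] and c3 = coc[of "n a" b "n c"]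
  note k = con[of a b "n c"]
  show ?thesis
    using c1 c2 c3 k skw[of "n (n c)" b a] skw[of b "n (n c)" a] skw[of a b "n (n c)"]
      skw[of "n c" b "n a"] skw[of "n c" "n b" a] skw[of "n b" "n c" a] skw[of "n a" b "n c"]
      skw[of b "n c" "n a"] skw[of a "n c" "n b"]
      skw[of "n a" "n c" b] skw[of b "n a" "n c"] skw[of "n b" a "n c"] skw[of "n c" a "n b"]
    by linarith
qed

lemma dual_lin: "\<mu> \<in> dual \<Longrightarrow> linear \<mu>" by (simp add: dual_def)

lemma dual_add: "\<mu> \<in> dual \<Longrightarrow> \<nu> \<in> dual \<Longrightarrow> (\<lambda>x. \<mu> x + \<nu> x) \<in> dual"
  by (simp add: dual_def linear_compose_add)

lemma dual_scal: "\<mu> \<in> dual \<Longrightarrow> (\<lambda>x. c * \<mu> x) \<in> dual"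
  unfolding dual_def linear_iff by (simp add: algebra_simps)

lemma dual_inner: "(\<lambda>x. x \<bullet> b) \<in> dual"
  unfolding dual_def by (simp add: linear_iff inner_add_left)

lemma dual_zero: "(\<lambda>x. 0) \<in> dual"
  unfolding dual_def by (simp add: linear_iff)

lemma separation:
  fixes x y :: "'a::euclidean_space"
  assumes "\<forall>\<mu>\<in>dual. \<mu> x = \<mu> y"
  shows "x = y"
proof -
  have "(\<lambda>z. (x - y) \<bullet> z) \<in> dual"
    unfolding dual_def by (simp add: linear_iff inner_add_right)
  with assms have "(x - y) \<bullet> x = (x - y) \<bullet> y" by auto
  hence "(x - y) \<bullet> (x - y) = 0" by (simp add: inner_diff_right)
  thus ?thesis by simp
qed

context
  fixes r :: "('a::euclidean_space \<Rightarrow> real) \<Rightarrow> ('a \<Rightarrow> real) \<Rightarrow> real"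
  assumes w2: "wedge2 r"
begin

lemma r_skew: "\<eta> \<in> dual \<Longrightarrow> \<mu> \<in> dual \<Longrightarrow> r \<eta> \<mu> = - r \<mu> \<eta>"
  using w2 unfolding wedge2_def by blast

lemma r_add1: "\<eta> \<in> dual \<Longrightarrow> \<mu> \<in> dual \<Longrightarrow> \<nu> \<in> dual \<Longrightarrow> r (\<lambda>x. \<eta> x + \<mu> x) \<nu> = r \<eta> \<nu> + r \<mu> \<nu>"
  using w2 unfolding wedge2_def by blast

lemma r_scal1: "\<eta> \<in> dual \<Longrightarrow> \<mu> \<in> dual \<Longrightarrow> r (\<lambda>x. c * \<eta> x) \<mu> = c * r \<eta> \<mu>"
  using w2 unfolding wedge2_def by blast

lemma r_add2: "\<eta> \<in> dual \<Longrightarrow> \<mu> \<in> dual \<Longrightarrow> \<nu> \<in> dual \<Longrightarrow> r \<eta> (\<lambda>x. \<mu> x + \<nu> x) = r \<eta> \<mu> + r \<eta> \<nu>"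
proof -
  assume h: "\<eta> \<in> dual" "\<mu> \<in> dual" "\<nu> \<in> dual"
  have "r \<eta> (\<lambda>x. \<mu> x + \<nu> x) = - r (\<lambda>x. \<mu> x + \<nu> x) \<eta>"
    using r_skew[OF h(1) dual_add[OF h(2) h(3)]] by linarith
  also have "\<dots> = - (r \<mu> \<eta> + r \<nu> \<eta>)" using r_add1 h by simp
  also have "\<dots> = r \<eta> \<mu> + r \<eta> \<nu>" using r_skew[OF h(1) h(2)] r_skew[OF h(1) h(3)] by linarith
  finally show ?thesis .
qed

lemma r_scal2: "\<eta> \<in> dual \<Longrightarrow> \<mu> \<in> dual \<Longrightarrow> r \<eta> (\<lambda>x. c * \<mu> x) = c * r \<eta> \<mu>"
proof -
  assume h: "\<eta> \<in> dual" "\<mu> \<in> dual"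
  have "r \<eta> (\<lambda>x. c * \<mu> x) = - r (\<lambda>x. c * \<mu> x) \<eta>"
    using r_skew[OF h(1) dual_scal[OF h(2), of c]] by linarith
  also have "\<dots> = - (c * r \<mu> \<eta>)" using r_scal1 h by simp
  also have "\<dots> = c * r \<eta> \<mu>" using r_skew[OF h(1) h(2)] by simp
  finally show ?thesis .
qed

lemma r_zero2: "\<eta> \<in> dual \<Longrightarrow> r \<eta> (\<lambda>x. 0) = 0"
  using r_scal2[of \<eta> "\<lambda>x. 0" 0] dual_zero by simp

lemma r_sum2:
  assumes "\<eta> \<in> dual" "finite S"
  shows "r \<eta> (\<lambda>x. \<Sum>b\<in>S. c b * (x \<bullet> b)) = (\<Sum>b\<in>S. c b * r \<eta> (\<lambda>x. x \<bullet> b))"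
  using assms(2)
proof (induction S rule: finite_induct)
  case empty
  then show ?case using r_zero2[OF assms(1)] by simp
next
  case (insert b S)
  have d1: "(\<lambda>x. c b * (x \<bullet> b)) \<in> dual" using dual_scal dual_inner by blast
  have d2: "(\<lambda>x. \<Sum>b\<in>S. c b * (x \<bullet> b)) \<in> dual"
    unfolding dual_def mem_Collect_eq by (intro linear_compose_sum linearI ballI) (auto simp: algebra_simps inner_add_left)
  have "r \<eta> (\<lambda>x. \<Sum>b\<in>insert b S. c b * (x \<bullet> b))
      = r \<eta> (\<lambda>x. c b * (x \<bullet> b) + (\<Sum>b\<in>S. c b * (x \<bullet> b)))"
    using insert by simp
  also have "\<dots> = r \<eta> (\<lambda>x. c b * (x \<bullet> b)) + r \<eta> (\<lambda>x. \<Sum>b\<in>S. c b * (x \<bullet> b))"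
    using r_add2[OF assms(1) d1 d2] .
  also have "\<dots> = c b * r \<eta> (\<lambda>x. x \<bullet> b) + (\<Sum>b\<in>S. c b * r \<eta> (\<lambda>x. x \<bullet> b))"
    using r_scal2[OF assms(1) dual_inner] insert by simp
  finally show ?case using insert by simp
qed

lemma sharp_prop:
  assumes "\<eta> \<in> dual"
  shows "\<forall>\<mu>\<in>dual. \<mu> (sharp r \<eta>) = r \<eta> \<mu>"
proof -
  define \<xi> where "\<xi> = (\<Sum>b\<in>Basis. r \<eta> (\<lambda>x. x \<bullet> b) *\<^sub>R (b::'a))"
  have ex: "\<forall>\<mu>\<in>dual. \<mu> \<xi> = r \<eta> \<mu>"
  proof
    fix \<mu> :: "'a \<Rightarrow> real" assume m: "\<mu> \<in> dual"
    hence lin: "linear \<mu>" by (rule dual_lin)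
    have "\<mu> \<xi> = (\<Sum>b\<in>Basis. r \<eta> (\<lambda>x. x \<bullet> b) * \<mu> b)"
      unfolding \<xi>_def using lin by (simp add: linear_sum linear_scale)
    moreover have "\<mu> = (\<lambda>x. \<Sum>b\<in>Basis. \<mu> b * (x \<bullet> b))"
    proof
      fix x
      have "\<mu> x = \<mu> (\<Sum>b\<in>Basis. (x \<bullet> b) *\<^sub>R b)" by (simp add: euclidean_representation)
      also have "\<dots> = (\<Sum>b\<in>Basis. (x \<bullet> b) * \<mu> b)" using lin by (simp add: linear_sum linear_scale)
      finally show "\<mu> x = (\<Sum>b\<in>Basis. \<mu> b * (x \<bullet> b))" by (simp add: mult.commute)
    qed
    hence "r \<eta> \<mu> = (\<Sum>b\<in>Basis. \<mu> b * r \<eta> (\<lambda>x. x \<bullet> b))"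
      using r_sum2[OF assms, of Basis "\<lambda>b. \<mu> b"] by simp
    ultimately show "\<mu> \<xi> = r \<eta> \<mu>" by (simp add: mult.commute)
  qed
  have "sharp r \<eta> = \<xi>"
    unfolding sharp_def
  proof (rule the_equality)
    show "\<forall>\<mu>\<in>dual. \<mu> \<xi> = r \<eta> \<mu>" by (rule ex)
  next
    fix z assume "\<forall>\<mu>\<in>dual. \<mu> z = r \<eta> \<mu>"
    with ex show "z = \<xi>" by (intro separation) auto
  qed
  with ex show ?thesis by simp
qed

end


lemma sharp_nr:
  assumes "\<eta> \<in> dual"
  shows "sharp (nr n r) \<eta> = n (sharp r \<eta>)"
  unfolding sharp_def nr_def
  by (rule the_equality) (auto intro: separation)

theorem mainTheorem8:
  fixes br :: "'a::euclidean_space \<Rightarrow> 'a \<Rightarrow> 'a"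
    and r :: "('a \<Rightarrow> real) \<Rightarrow> ('a \<Rightarrow> real) \<Rightarrow> real"
    and n :: "'a \<Rightarrow> 'a"
  assumes "lie_algebra br"
    and "wedge2 r"
    and "CYBE br r"
    and "bij_betw (sharp r) dual UNIV"
    and "linear n"
    and "\<forall>\<eta>\<in>dual. n (sharp r \<eta>) = sharp r (dual_transpose n \<eta>)"
    and "\<forall>\<eta>1\<in>dual. \<forall>\<eta>2\<in>dual. concomitant br r n \<eta>1 \<eta>2 = (\<lambda>\<zeta>. 0)"
  shows "CYBE br (nr n r) \<longleftrightarrow> nijenhuis br n"
proof -
  note lie = assms(1) and w2 = assms(2) and cyb = assms(3) and bij = assms(4)
    and nlin = assms(5) and ncomp = assms(6) and conc = assms(7)
  define R where "R = sharp r"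
  define I where "I = inv_into dual R"
  define w where "w x y = I x y" for x y
  have inj: "inj_on R dual" and surj: "R ` dual = UNIV"
    using bij unfolding R_def bij_betw_def by auto
  have Id: "I x \<in> dual" for x
    unfolding I_def using surj by (metis UNIV_I inv_into_into)
  have RI: "R (I x) = x" for x
    unfolding I_def using surj by (metis UNIV_I f_inv_into_f)
  have IR: "\<eta> \<in> dual \<Longrightarrow> I (R \<eta>) = \<eta>" for \<eta>
    unfolding I_def using inj by (simp add: inv_into_f_f)
  have sp: "\<eta> \<in> dual \<Longrightarrow> \<mu> \<in> dual \<Longrightarrow> \<mu> (R \<eta>) = r \<eta> \<mu>" for \<eta> \<mu>
    using sharp_prop[OF w2] unfolding R_def by blast
  have wR: "\<eta> \<in> dual \<Longrightarrow> w (R \<eta>) y = \<eta> y" for \<eta> y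
    unfolding w_def using IR by simp
  have wlin: "linear (w x)" for x
    unfolding w_def using Id dual_lin by blast
  have wneg: "w x (- v) = - w x v" for x v using wlin linear_neg by blast
  have wadd: "w x (u + v) = w x u + w x v" for x u v using wlin linear_add by blast
  have wdiff: "w x (u - v) = w x u - w x v" for x u v using wlin linear_diff by blast
  have wzero: "w x 0 = 0" for x using wlin linear_0 by blast
  have wskew: "w x y = - w y x" for x y
  proof -
    have "w x y = I x (R (I y))" using RI unfolding w_def by simp
    also have "\<dots> = r (I y) (I x)" using sp[OF Id[of y] Id[of x]] .
    also have "\<dots> = - r (I x) (I y)" using r_skew[OF w2 Id[of y] Id[of x]] .
    also have "\<dots> = - I y (R (I x))" using sp[OF Id[of x] Id[of y]] by simp
    finally show ?thesis using RI unfolding w_def by simp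
  qed
  have wn: "w (n x) y = w x (n y)" for x y
  proof -
    have d: "dual_transpose n (I x) \<in> dual"
      using Id[of x] nlin unfolding dual_def dual_transpose_def by (simp add: linear_compose[unfolded o_def])
    have "n x = R (dual_transpose n (I x))"
      using ncomp Id[of x] RI[of x] unfolding R_def by metis
    hence "w (n x) y = dual_transpose n (I x) y" using wR[OF d] by simp
    thus ?thesis unfolding dual_transpose_def w_def by simp
  qed
  have bil: "bilinear br" using lie unfolding lie_algebra_def by blast
  have brskew: "br y z = - br z y" for y z
  proof -
    have l1: "br (y + z) u = br y u + br z u" for u
      using bil unfolding bilinear_def using linear_add[of "\<lambda>x. br x u"] by blast
    have l2: "br u (y + z) = br u y + br u z" for u
      using bil unfolding bilinear_def using linear_add[of "br u"] by blast
    have "br (y + z) (y + z) = br y y + br y z + br z y + br z z"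
      using l1 l2 by simp
    moreover have "br (y+z) (y+z) = 0" "br y y = 0" "br z z = 0"
      using lie unfolding lie_algebra_def by auto
    ultimately show ?thesis by (simp add: eq_neg_iff_add_eq_0)
  qed
  have skw: "w x (br y z) = - w x (br z y)" for x y z
    using brskew wneg by metis
  have coc: "w x (br y z) + w y (br z x) + w z (br x y) = 0" for x y z
  proof -
    have "I x (br (R (I y)) (R (I z))) - I y (br (R (I x)) (R (I z))) + I z (br (R (I x)) (R (I y))) = 0"
      using cyb Id unfolding CYBE_def R_def by blast
    hence "w x (br y z) - w y (br x z) + w z (br x y) = 0" using RI unfolding w_def by simp
    thus ?thesis using skw[of y x z] by linarith
  qed
  have con: "w x1 (br x2 (n z)) - w x2 (br x1 (n z)) + w (n x2) (br x1 z) - w (n x1) (br x2 z) = 0"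
    for x1 x2 z
  proof -
    have "concomitant br r n (I x1) (I x2) z = 0" using conc Id by metis
    hence "- I x2 (br (R (I x1)) (n z)) + I x2 (n (br (R (I x1)) z))
           + I x1 (br (R (I x2)) (n z)) - I x1 (n (br (R (I x2)) z)) = 0"
      unfolding concomitant_def comm_tn_coad_def dual_transpose_def coad_def R_def by simp
    hence "- w x2 (br x1 (n z)) + w x2 (n (br x1 z)) + w x1 (br x2 (n z)) - w x1 (n (br x2 z)) = 0"
      using RI unfolding w_def by simp
    thus ?thesis using wn by simp
  qed
  define T where "T a b = br (n a) (n b) - n (br (n a) b + br a (n b) - n (br a b))" for a b
  define E where "E a b c = w a (br (n b) (n c)) - w b (br (n a) (n c)) + w c (br (n a) (n b))" for a b c
  have ET: "E a b c = w c (T a b)" for a b c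
  proof -
    have "w c (T a b) = w c (br (n a) (n b)) - (w (n c) (br (n a) b) + w (n c) (br a (n b)) - w (n (n c)) (br a b))"
    proof -
      have "n (br (n a) b + br a (n b) - n (br a b)) = n (br (n a) b) + n (br a (n b)) - n (n (br a b))"
        using nlin by (simp add: linear_add linear_diff)
      thus ?thesis unfolding T_def using wdiff wadd wn by simp
    qed
    moreover have "w a (br (n b) (n c)) - w b (br (n a) (n c)) + w (n c) (br (n a) b) + w (n c) (br a (n b))
         - w (n (n c)) (br a b) = 0"
      by (rule key_identity[where w=w and br=br and n=n, OF coc con skw])
    ultimately show ?thesis unfolding E_def by linarith
  qed
  have cybe_iff: "CYBE br (nr n r) \<longleftrightarrow> (\<forall>a b c. E a b c = 0)"
  proof
    assume h: "CYBE br (nr n r)"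
    show "\<forall>a b c. E a b c = 0"
    proof (intro allI)
      fix a b c
      note h' = h[unfolded CYBE_def]
      have "I a (br (sharp (nr n r) (I b)) (sharp (nr n r) (I c))) - I b (br (sharp (nr n r) (I a)) (sharp (nr n r) (I c)))
            + I c (br (sharp (nr n r) (I a)) (sharp (nr n r) (I b))) = 0"
        using bspec[OF bspec[OF bspec[OF h' Id[of a]] Id[of b]] Id[of c]] .
      hence "I a (br (n (R (I b))) (n (R (I c)))) - I b (br (n (R (I a))) (n (R (I c))))
            + I c (br (n (R (I a))) (n (R (I b)))) = 0"
        unfolding sharp_nr[OF Id[of a]] sharp_nr[OF Id[of b]] sharp_nr[OF Id[of c]] R_def .
      thus "E a b c = 0" using RI unfolding E_def w_def by simp
    qed
  next
    assume h: "\<forall>a b c. E a b c = 0"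
    show "CYBE br (nr n r)"
      unfolding CYBE_def
    proof (intro ballI)
      fix \<eta>1 \<eta>2 \<eta>3 :: "'a \<Rightarrow> real"
      assume d: "\<eta>1 \<in> dual" "\<eta>2 \<in> dual" "\<eta>3 \<in> dual"
      have "E (R \<eta>1) (R \<eta>2) (R \<eta>3) = 0" using h by blast
      thus "\<eta>1 (br (sharp (nr n r) \<eta>2) (sharp (nr n r) \<eta>3)) - \<eta>2 (br (sharp (nr n r) \<eta>1) (sharp (nr n r) \<eta>3))
         + \<eta>3 (br (sharp (nr n r) \<eta>1) (sharp (nr n r) \<eta>2)) = 0"
        unfolding sharp_nr[OF d(1)] sharp_nr[OF d(2)] sharp_nr[OF d(3)] R_def[symmetric]
        using wR[OF d(1)] wR[OF d(2)] wR[OF d(3)] unfolding E_def by simp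
    qed
  qed
  have nondeg: "(\<forall>c. w c v = 0) \<Longrightarrow> v = 0" for v
  proof -
    assume h: "\<forall>c. w c v = 0"
    show "v = 0"
    proof (rule separation, intro ballI)
      fix \<mu> :: "'a \<Rightarrow> real" assume m: "\<mu> \<in> dual"
      have "\<mu> v = w (R \<mu>) v" using wR[OF m] by simp
      also have "\<dots> = 0" using h by simp
      also have "\<dots> = \<mu> 0" using dual_lin[OF m] linear_0 by metis
      finally show "\<mu> v = \<mu> 0" .
    qed
  qed
  have nij_iff: "nijenhuis br n \<longleftrightarrow> (\<forall>a b. T a b = 0)"
    unfolding nijenhuis_def T_def by (metis eq_iff_diff_eq_0)
  have "(\<forall>a b c. w c (T a b) = 0) \<longleftrightarrow> (\<forall>a b. T a b = 0)"
  proof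
    assume h: "\<forall>a b c. w c (T a b) = 0"
    show "\<forall>a b. T a b = 0"
    proof (intro allI)
      fix a b show "T a b = 0" using h by (intro nondeg) blast
    qed
  qed (simp add: wzero)
  thus ?thesis
    unfolding cybe_iff nij_iff ET .
qed

end
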